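(* Let $f:\mathbb{R}^{n_x}\to\mathbb{R}$ be a differentiable (Lipschitz) objective and let $\varphi:\mathcal{X}\times\mathcal{H}\times\mathcal{W}\to\mathcal{X}$ be an update rule, differentiable in its meta-parameters $w\in\mathcal{W}\subset\mathbb{R}^{n_w}$. Fix $(x^{(0)},h^{(0)},w)$ and define $x^{(k)}=x^{(k-1)}+\varphi(x^{(k-1)},h^{(k-1)},w)$ for $k=1,\dots,K$, where each learner state $h^{(k)}$ is produced by a fixed process from the history $(x^{(0)},h^{(0)},\dots,x^{(k-1)},h^{(k-1)},x^{(k)})$; view $x^{(K)}=x^{(K)}(w)$ as a (Lipschitz, differentiable) function of $w$. Let $D:=\big[\tfrac{\partial}{\partial w}x^{(K)}(w)\big]^T\in\mathbb{R}^{n_w\times n_x}$, $G^T:=D^TD$, $g:=\nabla_x f(x^{(K)})$ and $r:=\|g\|_2/\|G^Tg\|_2$. Let $\mu(a,b)=\|a-b\|_2^2$ and $\tilde x=x^{(K)}-rG^Tg$ (treated as a constant). Let $w'=w-\beta\nabla_w f(x^{(K)}(w))$ and $\tilde w=w-\beta\nabla_w\mu(\tilde x,x^{(K)}(w))$, with the same $\beta>0$. Then for $\beta$ sufficiently small, $f(x^{(K)}(\tilde w))\le f(x^{(K)}(w'))$, strictly if $GG^T\neq G^T$ and $G^T\nabla_x f(x^{(K)})\neq 0$.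
   Context: Noiseless setting: all updates are considered in expectation (true gradients). $w'$ is the standard meta-gradient update and $\tilde w$ the bootstrapped meta-gradient update (gradient taken through the second argument of $\mu$, not through the target $\tilde x$). *)

theory Defs
  imports "HOL-Analysis.Analysis"
begin

text \<open>The list holds the history
  (x0,h0), (x1,h1), ..., (xk,hk).\<close>
fun traj :: "(real^'nx \<Rightarrow> 'h \<Rightarrow> real^'nw \<Rightarrow> real^'nx)
      \<Rightarrow> (((real^'nx) \<times> 'h) list \<Rightarrow> real^'nx \<Rightarrow> 'h)
      \<Rightarrow> real^'nx \<Rightarrow> 'h \<Rightarrow> real^'nw \<Rightarrow> nat \<Rightarrow> ((real^'nx) \<times> 'h) list" where
  "traj \<phi> P x0 h0 w 0 = [(x0, h0)]"
| "traj \<phi> P x0 h0 w (Suc k) =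
     (let hist = traj \<phi> P x0 h0 w k;
          xk = fst (last hist); hk = snd (last hist);
          xn = xk + \<phi> xk hk w
      in hist @ [(xn, P hist xn)])"

definition xK :: "(real^'nx \<Rightarrow> 'h \<Rightarrow> real^'nw \<Rightarrow> real^'nx)
      \<Rightarrow> (((real^'nx) \<times> 'h) list \<Rightarrow> real^'nx \<Rightarrow> 'h)
      \<Rightarrow> real^'nx \<Rightarrow> 'h \<Rightarrow> nat \<Rightarrow> real^'nw \<Rightarrow> real^'nx" where
  "xK \<phi> P x0 h0 K w = fst (last (traj \<phi> P x0 h0 w K))"

definition grad :: "('a::real_inner \<Rightarrow> real) \<Rightarrow> 'a \<Rightarrow> 'a" where
  "grad F x = (THE v. (F has_derivative (\<lambda>u. v \<bullet> u)) (at x))"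

definition mu :: "'a::real_normed_vector \<Rightarrow> 'a \<Rightarrow> real" where
  "mu a b = (norm (a - b))\<^sup>2"

end

theory Submission
  imports Defs
begin

lemma grad_eq:
  fixes F :: "'a::euclidean_space \<Rightarrow> real"
  assumes "(F has_derivative (\<lambda>u. v \<bullet> u)) (at x)"
  shows "grad F x = v"
  unfolding grad_def
proof (rule the_equality)
  fix v' assume "(F has_derivative (\<lambda>u. v' \<bullet> u)) (at x)"
  from has_derivative_unique[OF this assms] have "\<forall>u. v' \<bullet> u = v \<bullet> u" by metis
  then show "v' = v" using vector_eq_rdot by blast
qed (rule assms)

lemma grad_exists:
  fixes F :: "'a::euclidean_space \<Rightarrow> real"
  assumes "F differentiable (at x)"
  shows "(F has_derivative (\<lambda>u. grad F x \<bullet> u)) (at x)"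
proof -
  obtain F' where F': "(F has_derivative F') (at x)" using assms differentiable_def by blast
  then have lin: "linear F'" using has_derivative_linear by blast
  have "F' = (\<lambda>u. adjoint F' 1 \<bullet> u)"
  proof
    fix u
    have "u \<bullet> adjoint F' 1 = F' u \<bullet> 1" using adjoint_works[OF lin] by blast
    then show "F' u = adjoint F' 1 \<bullet> u" by (simp add: inner_commute)
  qed
  with F' have "(F has_derivative (\<lambda>u. adjoint F' 1 \<bullet> u)) (at x)" by simp
  with grad_eq[OF this] show ?thesis by simp
qed

lemma inner_mat: "(g::real^'m) \<bullet> (A *v y) = (transpose A *v g) \<bullet> y"
  by (simp add: dot_lmul_matrix)

theorem corollary1:
  fixes f :: "real^'nx \<Rightarrow> real"
    and \<phi> :: "real^'nx \<Rightarrow> 'h \<Rightarrow> real^'nw \<Rightarrow> real^'nx"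
    and P :: "((real^'nx) \<times> 'h) list \<Rightarrow> real^'nx \<Rightarrow> 'h"
    and x0 :: "real^'nx" and h0 :: 'h and K :: nat
    and W :: "(real^'nw) set" and w :: "real^'nw"
    and X' :: "real^'nw \<Rightarrow> real^'nx"
  assumes f_diff: "\<forall>x. f differentiable (at x)"
    and f_lip: "\<exists>L. L-lipschitz_on UNIV f"
    and W_open: "open W" and w_in: "w \<in> W"
    and phi_diff: "\<forall>x h. (\<lambda>v. \<phi> x h v) differentiable_on W"
    and X_lip: "\<exists>L. L-lipschitz_on W (xK \<phi> P x0 h0 K)"
    and X_diff: "\<forall>v\<in>W. (xK \<phi> P x0 h0 K) differentiable (at v)"
    and X_deriv: "(xK \<phi> P x0 h0 K has_derivative X') (at w)"
  shows
    "let X = xK \<phi> P x0 h0 K;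
         D = transpose (matrix X');
         GT = transpose D ** D;
         G = transpose GT;
         g = grad f (X w);
         r = norm g / norm (GT *v g);
         xt = X w - r *\<^sub>R (GT *v g)
     in \<exists>\<beta>0>0. \<forall>\<beta>. 0 < \<beta> \<and> \<beta> < \<beta>0 \<longrightarrow>
          (let w' = w - \<beta> *\<^sub>R grad (\<lambda>v. f (X v)) w;
               wt = w - \<beta> *\<^sub>R grad (\<lambda>v. mu xt (X v)) w
           in f (X wt) \<le> f (X w') \<and>
              ((G ** GT \<noteq> GT \<and> GT *v g \<noteq> 0) \<longrightarrow> f (X wt) < f (X w')))"
proof -
  define X where "X = xK \<phi> P x0 h0 K"
  define J where "J = matrix X'"
  define D where "D = transpose J"
  define GT where "GT = transpose D ** D"
  define g where "g = grad f (X w)"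
  define r where "r = norm g / norm (GT *v g)"
  define xt where "xt = X w - r *\<^sub>R (GT *v g)"
  have XD: "(X has_derivative X') (at w)" using X_deriv X_def by simp
  have lin: "linear X'" using has_derivative_linear[OF XD] .
  have XJ: "X' u = J *v u" for u unfolding J_def
    using fun_cong[OF matrix_vector_mul(2)[OF lin]] by simp
  have GTs: "transpose GT = GT" unfolding GT_def by (simp add: matrix_transpose_mul)
  have GTJ: "GT = J ** transpose J" unfolding GT_def D_def by simp
  have hf: "(f has_derivative (\<lambda>u. g \<bullet> u)) (at (X w))"
    unfolding g_def using grad_exists f_diff by blast
  define d1 where "d1 = D *v g"
  define d2 where "d2 = (2 * r) *\<^sub>R (D *v (GT *v g))"
  have hF: "((\<lambda>v. f (X v)) has_derivative (\<lambda>u. d1 \<bullet> u)) (at w)"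
  proof -
    have "((\<lambda>v. f (X v)) has_derivative (\<lambda>u. g \<bullet> X' u)) (at w)"
      using has_derivative_compose[OF XD hf] by (simp add: o_def)
    moreover have "(\<lambda>u. g \<bullet> X' u) = (\<lambda>u. d1 \<bullet> u)"
      by (rule ext) (simp add: XJ d1_def D_def inner_mat)
    ultimately show ?thesis by simp
  qed
  have g1: "grad (\<lambda>v. f (X v)) w = d1" using grad_eq[OF hF] .
  have hM: "((\<lambda>v. mu xt (X v)) has_derivative (\<lambda>u. d2 \<bullet> u)) (at w)"
  proof -
    have e: "(\<lambda>v. mu xt (X v)) = (\<lambda>v. (xt - X v) \<bullet> (xt - X v))"
      unfolding mu_def by (simp add: power2_norm_eq_inner)
    have dd: "((\<lambda>v. xt - X v) has_derivative (\<lambda>u. - X' u)) (at w)"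
      using has_derivative_diff[OF has_derivative_const XD] by simp
    have "((\<lambda>v. (xt - X v) \<bullet> (xt - X v)) has_derivative
        (\<lambda>u. (xt - X w) \<bullet> (- X' u) + (- X' u) \<bullet> (xt - X w))) (at w)"
      using has_derivative_inner[OF dd dd] by simp
    moreover have "(\<lambda>u. (xt - X w) \<bullet> (- X' u) + (- X' u) \<bullet> (xt - X w)) = (\<lambda>u. d2 \<bullet> u)"
    proof (rule ext)
      fix u
      have "(xt - X w) \<bullet> (- X' u) + (- X' u) \<bullet> (xt - X w) = (2*r) * ((GT *v g) \<bullet> (J *v u))"
        unfolding xt_def XJ by (simp add: inner_commute algebra_simps)
      also have "\<dots> = d2 \<bullet> u" unfolding d2_def D_def by (simp add: inner_mat)
      finally show "(xt - X w) \<bullet> (- X' u) + (- X' u) \<bullet> (xt - X w) = d2 \<bullet> u" .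
    qed
    ultimately show ?thesis using e by simp
  qed
  have g2: "grad (\<lambda>v. mu xt (X v)) w = d2" using grad_eq[OF hM] .
  have Jd1: "J *v d1 = GT *v g"
    by (simp only: d1_def D_def GTJ matrix_vector_mul_assoc)
  have c1: "d1 \<bullet> d1 = g \<bullet> (GT *v g)"
  proof -
    have "d1 \<bullet> d1 = d1 \<bullet> (transpose J *v g)" by (simp only: d1_def D_def)
    also have "\<dots> = (J *v d1) \<bullet> g" by (simp only: inner_mat transpose_transpose)
    finally show ?thesis by (simp add: Jd1 inner_commute)
  qed
  have c2: "d1 \<bullet> d2 = 2 * r * ((GT *v g) \<bullet> (GT *v g))"
  proof -
    have "d1 \<bullet> d2 = 2 * r * (d1 \<bullet> (transpose J *v (GT *v g)))"
      by (simp only: d2_def D_def inner_scaleR_right)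
    also have "d1 \<bullet> (transpose J *v (GT *v g)) = (J *v d1) \<bullet> (GT *v g)"
      by (simp only: inner_mat transpose_transpose)
    finally show ?thesis by (simp add: Jd1)
  qed
  have main: "\<exists>\<beta>0>0. \<forall>\<beta>. 0 < \<beta> \<and> \<beta> < \<beta>0 \<longrightarrow>
     f (X (w - \<beta> *\<^sub>R d2)) \<le> f (X (w - \<beta> *\<^sub>R d1)) \<and>
     (GT *v g \<noteq> 0 \<longrightarrow> f (X (w - \<beta> *\<^sub>R d2)) < f (X (w - \<beta> *\<^sub>R d1)))"
  proof (cases "GT *v g = 0")
    case True
    then have "d2 = 0" unfolding d2_def by simp
    moreover have "d1 = 0" using c1 True by simp
    ultimately show ?thesis using True by (intro exI[of _ 1]) simp
  next
    case False
    have ng: "norm (GT *v g) > 0" using False by simp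
    have "g \<noteq> 0" using False by auto
    then have ngg: "norm g > 0" by simp
    have c2': "d1 \<bullet> d2 = 2 * (norm g * norm (GT *v g))"
      unfolding c2 r_def using ng by (simp add: power2_norm_eq_inner[symmetric] power2_eq_square)
    have cs: "g \<bullet> (GT *v g) \<le> norm g * norm (GT *v g)" by (rule norm_cauchy_schwarz)
    have neg: "d1 \<bullet> d1 - d1 \<bullet> d2 < 0" using c1 c2' cs ng ngg
      by (smt (verit) mult_pos_pos)
    define p where "p = (\<lambda>t::real. f (X (w - t *\<^sub>R d2)) - f (X (w - t *\<^sub>R d1)))"
    have lin_d: "((\<lambda>t::real. w - t *\<^sub>R d) has_derivative (\<lambda>t. - (t *\<^sub>R d))) (at 0)" for d
      using has_derivative_diff[OF has_derivative_const has_derivative_scaleR_left[OF has_derivative_ident]]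
      by simp
    have cd: "((\<lambda>t::real. f (X (w - t *\<^sub>R d))) has_derivative (\<lambda>t. t * (- (d1 \<bullet> d)))) (at 0)" for d
    proof -
      have "((\<lambda>t::real. f (X (w - t *\<^sub>R d))) has_derivative (\<lambda>t. d1 \<bullet> (- (t *\<^sub>R d)))) (at 0)"
        using has_derivative_compose[OF lin_d[of d], of "\<lambda>v. f (X v)" "\<lambda>u. d1 \<bullet> u"] hF by (simp add: o_def)
      then show ?thesis by (simp add: mult.commute)
    qed
    have "((\<lambda>t. f (X (w - t *\<^sub>R d2)) - f (X (w - t *\<^sub>R d1))) has_derivative
        (\<lambda>t. t * (- (d1 \<bullet> d2)) - t * (- (d1 \<bullet> d1)))) (at 0)"
      by (rule has_derivative_diff[OF cd cd])
    then have "(p has_derivative (\<lambda>t. t * (d1 \<bullet> d1 - d1 \<bullet> d2))) (at 0)"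
      unfolding p_def by (simp add: algebra_simps)
    then have "DERIV p 0 :> (d1 \<bullet> d1 - d1 \<bullet> d2)"
      unfolding has_field_derivative_def by (metis (no_types, lifting) mult.commute ext)
    from DERIV_neg_dec_right[OF this neg] obtain d where
      "d > 0" "\<forall>h>0. h < d \<longrightarrow> p 0 > p (0 + h)" by blast
    then show ?thesis unfolding p_def by (intro exI[of _ d]) auto
  qed
  show ?thesis
    unfolding Let_def X_def[symmetric] J_def[symmetric] D_def[symmetric] GT_def[symmetric]
      g_def[symmetric] r_def[symmetric] xt_def[symmetric] g1 g2
    using main by (meson less_imp_le)
qed

end
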